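(* Let $N\ge1$ be an integer and $\Delta(r)=\lceil\min\{r,N-r\}/3\rceil$ for $r\in\{0,\dots,N\}$. Let $(X_\ell)_{\ell\ge0}$ be a Markov chain on $\{0,\dots,N\}$ with $X_0\in\{1,\dots,N\}$ and, conditionally on $X_0,\dots,X_\ell$, $X_{\ell+1}=X_\ell+\Delta(X_\ell)$ or $X_{\ell+1}=X_\ell-\Delta(X_\ell)$, each with probability $1/2$. Let $\mathrm{Fill}=\{\lim_{\ell\to\infty}X_\ell=N\}$. Then for every $\ell\ge1$, \[1-\mathbb E\Big[\frac{X_\ell}{N}\,\Big|\,\mathrm{Fill}\Big]\le\Big(\frac{71}{72}\Big)^{\ell}\sqrt N.\]
   Context: In the paper, $X_\ell$ is the total ink just after the $\ell$-th depinking time of the chameleon process and $N=a(m-1)+bn$; the claim above is the statement in terms of the Markov chain that this ink sequence forms. *)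

theory Defs
  imports "HOL-Probability.Probability"
begin

definition chamDelta :: "nat \<Rightarrow> nat \<Rightarrow> nat" where
  "chamDelta N r = nat \<lceil>real (min r (N - r)) / 3\<rceil>"

definition fillEvent :: "'a measure \<Rightarrow> (nat \<Rightarrow> 'a \<Rightarrow> nat) \<Rightarrow> nat \<Rightarrow> 'a set" where
  "fillEvent M X N = {\<omega> \<in> space M. (\<lambda>l. real (X l \<omega>)) \<longlonglongrightarrow> real N}"

text \<open>Markov property with the chain's transition kernel, stated via finite-dimensional
  distributions: for every history xs = (x_0,...,x_l) and every y,
  P(X_0=x_0,...,X_l=x_l, X_(l+1)=y) = K(x_l,y) * P(X_0=x_0,...,X_l=x_l),
  where K(x,y) = 1/2 [y = x + Delta x] + 1/2 [y = x - Delta x].\<close>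
definition inkKernel :: "nat \<Rightarrow> nat \<Rightarrow> nat \<Rightarrow> real" where
  "inkKernel N x y =
     (if y = x + chamDelta N x then 1/2 else 0) + (if y = x - chamDelta N x then 1/2 else 0)"

definition inkChain :: "'a measure \<Rightarrow> (nat \<Rightarrow> 'a \<Rightarrow> nat) \<Rightarrow> nat \<Rightarrow> bool" where
  "inkChain M X N \<longleftrightarrow>
     (\<forall>i. X i \<in> measurable M (count_space UNIV)) \<and>
     (AE \<omega> in M. X 0 \<omega> \<in> {1..N}) \<and>
     (\<forall>l xs y. length xs = Suc l \<longrightarrow>
        measure M {\<omega> \<in> space M. (\<forall>i\<le>l. X i \<omega> = xs ! i) \<and> X (Suc l) \<omega> = y}
        = inkKernel N (last xs) y * measure M {\<omega> \<in> space M. \<forall>i\<le>l. X i \<omega> = xs ! i})"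

end

theory Submission
  imports Defs
begin

lemma sq_sum: "0 \<le> (p::real) \<Longrightarrow> 0 \<le> q \<Longrightarrow> (sqrt p + sqrt q)^2 = p + q + 2 * sqrt(p*q)"
  by (simp add: power2_sum real_sqrt_mult)

lemma key_real:
  fixes a b d :: real
  assumes d0: "0 \<le> d" and da: "d \<le> a" and db: "d \<le> b" and m3: "min a b \<le> 3*d"
  shows "sqrt ((a+d)*(b-d)) + sqrt ((a-d)*(b+d)) \<le> 2 * (71/72) * sqrt (a*b)"
proof -
  define k :: real where "k = 2449/2592"
  have a0: "0 \<le> a" and b0: "0 \<le> b" using d0 da db by auto
  have P0: "0 \<le> (a+d)*(b-d)" and Q0: "0 \<le> (a-d)*(b+d)" using a0 b0 d0 da db by auto
  have k0: "0 \<le> k" unfolding k_def by simp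
  have mm: "(min a b)^2 \<le> 9*d^2"
  proof -
    have "0 \<le> min a b" using a0 b0 by simp
    then have "(min a b)^2 \<le> (3*d)^2" using m3 by (intro power_mono) auto
    then show ?thesis by (simp add: power_mult_distrib)
  qed
  have ab: "a^2*b^2 \<le> 9*d^2*(a^2+b^2+2*k*a*b)"
  proof (cases "a \<le> b")
    case True
    then have "a^2 \<le> 9*d^2" using mm by simp
    then have "a^2*b^2 \<le> 9*d^2*b^2" by (simp add: mult_right_mono)
    also have "\<dots> \<le> 9*d^2*(a^2+b^2+2*k*a*b)"
      using a0 b0 k0 by (intro mult_left_mono) auto
    finally show ?thesis .
  next
    case False
    then have "b^2 \<le> 9*d^2" using mm by simp
    then have "a^2*b^2 \<le> 9*d^2*a^2" by (simp add: mult_left_mono mult.commute)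
    also have "\<dots> \<le> 9*d^2*(a^2+b^2+2*k*a*b)"
      using a0 b0 k0 by (intro mult_left_mono) auto
    finally show ?thesis .
  qed
  have h1: "((a+d)*(b-d))*((a-d)*(b+d)) \<le> (k*a*b + d^2)^2"
  proof -
    have e1: "((a+d)*(b-d))*((a-d)*(b+d)) = a^2*b^2 - d^2*(a^2+b^2) + d^4"
      by (simp add: algebra_simps power2_eq_square power4_eq_xxxx)
    have e2: "(k*a*b + d^2)^2 = k^2*a^2*b^2 + 2*k*a*b*d^2 + d^4"
      by (simp add: algebra_simps power2_eq_square power4_eq_xxxx)
    have kk: "1 - k^2 \<le> 1/9" unfolding k_def by (simp add: power2_eq_square)
    have "(1 - k^2)*(a^2*b^2) \<le> (1/9)*(a^2*b^2)"
      using kk by (intro mult_right_mono) auto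
    also have "\<dots> \<le> d^2*(a^2+b^2+2*k*a*b)" using ab by simp
    finally show ?thesis unfolding e1 e2 by (simp add: algebra_simps)
  qed
  have h2: "sqrt (((a+d)*(b-d))*((a-d)*(b+d))) \<le> k*a*b + d^2"
    using h1 k0 a0 b0 by (intro real_le_lsqrt) auto
  have h3: "(sqrt ((a+d)*(b-d)) + sqrt ((a-d)*(b+d)))^2 \<le> (2 * (71/72))^2*(a*b)"
  proof -
    have "(sqrt ((a+d)*(b-d)) + sqrt ((a-d)*(b+d)))^2
        = (a+d)*(b-d) + (a-d)*(b+d) + 2 * sqrt (((a+d)*(b-d))*((a-d)*(b+d)))"
      using sq_sum[OF P0 Q0] .
    also have "\<dots> \<le> (a+d)*(b-d) + (a-d)*(b+d) + 2*(k*a*b + d^2)" using h2 by simp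
    also have "\<dots> = (2 * (71/72))^2*(a*b)" unfolding k_def by (simp add: algebra_simps power2_eq_square)
    finally show ?thesis .
  qed
  have "sqrt ((a+d)*(b-d)) + sqrt ((a-d)*(b+d)) \<le> sqrt ((2 * (71/72))^2*(a*b))"
    using h3 by (intro real_le_rsqrt)
  also have "\<dots> = 2 * (71/72) * sqrt (a*b)" by (simp add: real_sqrt_mult)
  finally show ?thesis .
qed

locale ink = prob_space M for M :: "'a measure" +
  fixes X :: "nat \<Rightarrow> 'a \<Rightarrow> nat" and N :: nat
  assumes N1: "N \<ge> 1" and chain: "inkChain M X N"
begin

definition C :: "nat \<Rightarrow> nat list \<Rightarrow> 'a set" where
  "C m xs = {\<omega>\<in>space M. \<forall>i\<le>m. X i \<omega> = xs!i}"
definition H :: "nat \<Rightarrow> nat list set" where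
  "H m = {xs. set xs \<subseteq> {..N} \<and> length xs = Suc m}"
definition hist :: "nat \<Rightarrow> 'a \<Rightarrow> nat list" where
  "hist m \<omega> = map (\<lambda>i. X i \<omega>) [0..<Suc m]"
definition E :: "nat \<Rightarrow> (nat list \<Rightarrow> real) \<Rightarrow> real" where
  "E m h = (\<Sum>xs\<in>H m. h xs * measure M (C m xs))"

lemma measX[measurable]: "X i \<in> measurable M (count_space UNIV)"
  using chain unfolding inkChain_def by blast

lemma C_sets[measurable]: "C m xs \<in> sets M"
  unfolding C_def by measurable

lemma finH: "finite (H m)"
  unfolding H_def by (rule finite_lists_length_eq) simp

lemma hist_len[simp]: "length (hist m \<omega>) = Suc m"
  by (simp add: hist_def)

lemma last_hist[simp]: "last (hist m \<omega>) = X m \<omega>"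
  by (simp add: hist_def del: upt_Suc add: upt_Suc_append)

lemma in_C_iff: "length xs = Suc m \<Longrightarrow> \<omega> \<in> space M \<Longrightarrow> (\<omega> \<in> C m xs) = (hist m \<omega> = xs)"
  unfolding C_def hist_def
  by (auto simp: list_eq_iff_nth_eq less_Suc_eq_le nth_append simp del: upt_Suc)

lemma markov: "length xs = Suc m \<Longrightarrow>
   measure M (C (Suc m) (xs@[y])) = inkKernel N (last xs) y * measure M (C m xs)"
proof -
  assume len: "length xs = Suc m"
  have "C (Suc m) (xs@[y]) = {\<omega> \<in> space M. (\<forall>i\<le>m. X i \<omega> = xs ! i) \<and> X (Suc m) \<omega> = y}"
    unfolding C_def using len
    by (auto simp: nth_append le_Suc_eq less_Suc_eq_le)
  then show ?thesis using chain len unfolding inkChain_def C_def by auto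
qed


lemma Delta_le: "chamDelta N x \<le> min x (N - x)"
proof -
  have "\<lceil>real (min x (N - x)) / 3\<rceil> \<le> int (min x (N - x))"
    by (simp add: ceiling_le_iff)
  then show ?thesis unfolding chamDelta_def by linarith
qed

lemma Delta_ge: "real (min x (N - x)) \<le> 3 * real (chamDelta N x)"
proof -
  have "real (min x (N - x)) / 3 \<le> real_of_int \<lceil>real (min x (N - x)) / 3\<rceil>"
    by (rule le_of_int_ceiling)
  then show ?thesis unfolding chamDelta_def by linarith
qed

lemma Delta_N: "chamDelta N N = 0"
  unfolding chamDelta_def by simp

lemma Ksum: "x \<le> N \<Longrightarrow> (\<Sum>y\<in>{..N}. f y * inkKernel N x y)
   = (f (x + chamDelta N x) + f (x - chamDelta N x)) / 2"
proof -
  assume x: "x \<le> N"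
  have a: "x + chamDelta N x \<in> {..N}" "x - chamDelta N x \<in> {..N}" using Delta_le[of x] x by auto
  have "(\<Sum>y\<in>{..N}. f y * inkKernel N x y) =
     (\<Sum>y\<in>{..N}. (if y = x + chamDelta N x then f y / 2 else 0)) +
     (\<Sum>y\<in>{..N}. (if y = x - chamDelta N x then f y / 2 else 0))"
    unfolding inkKernel_def sum.distrib[symmetric]
    by (rule sum.cong) (auto simp: algebra_simps)
  also have "\<dots> = f (x + chamDelta N x) / 2 + f (x - chamDelta N x) / 2"
    using a by (simp add: sum.delta')
  finally show ?thesis by simp
qed

lemma K_zero_gt: "x \<le> N \<Longrightarrow> N < y \<Longrightarrow> inkKernel N x y = 0"
  using Delta_le[of x] unfolding inkKernel_def by auto

lemma K_zero_N: "y \<noteq> N \<Longrightarrow> inkKernel N N y = 0"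
  unfolding inkKernel_def Delta_N by auto

lemma null_C: "measure M A = 0 \<Longrightarrow> A \<in> sets M \<Longrightarrow> AE \<omega> in M. \<omega> \<notin> A"
  by (intro AE_not_in null_setsI) (simp add: emeasure_eq_measure)

lemma AE_step_bound: "AE \<omega> in M. X m \<omega> \<le> N \<longrightarrow> X (Suc m) \<omega> \<le> N"
proof -
  have "AE \<omega> in M. \<forall>p::nat list \<times> nat. length (fst p) = Suc m \<and> last (fst p) \<le> N \<and> N < snd p
      \<longrightarrow> \<omega> \<notin> C (Suc m) (fst p @ [snd p])"
    unfolding AE_all_countable
  proof
    fix p :: "nat list \<times> nat"
    show "AE \<omega> in M. length (fst p) = Suc m \<and> last (fst p) \<le> N \<and> N < snd p
      \<longrightarrow> \<omega> \<notin> C (Suc m) (fst p @ [snd p])"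
    proof (cases "length (fst p) = Suc m \<and> last (fst p) \<le> N \<and> N < snd p")
      case True
      then have "measure M (C (Suc m) (fst p @ [snd p])) = 0"
        using markov K_zero_gt by simp
      then show ?thesis using null_C[OF _ C_sets] by (auto elim!: eventually_mono)
    qed auto
  qed
  with AE_space show ?thesis
  proof (eventually_elim)
    case (elim \<omega>)
    then have True: "\<omega> \<in> space M" and h: "\<forall>p::nat list \<times> nat. length (fst p) = Suc m \<and> last (fst p) \<le> N \<and> N < snd p
      \<longrightarrow> \<omega> \<notin> C (Suc m) (fst p @ [snd p])" by auto
    show "X m \<omega> \<le> N \<longrightarrow> X (Suc m) \<omega> \<le> N"
    proof -
      have "hist (Suc m) \<omega> = hist m \<omega> @ [X (Suc m) \<omega>]" by (simp add: hist_def)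
      then have "\<omega> \<in> C (Suc m) (hist m \<omega> @ [X (Suc m) \<omega>])" using in_C_iff True by simp
      then show ?thesis using h[rule_format, of "(hist m \<omega>, X (Suc m) \<omega>)"]
        by (auto simp del: last_hist simp add: last_hist[symmetric] not_less[symmetric])
    qed
  qed
qed


lemma AE_step_absorb: "AE \<omega> in M. X m \<omega> = N \<longrightarrow> X (Suc m) \<omega> = N"
proof -
  have "AE \<omega> in M. \<forall>p::nat list \<times> nat. length (fst p) = Suc m \<and> last (fst p) = N \<and> snd p \<noteq> N
      \<longrightarrow> \<omega> \<notin> C (Suc m) (fst p @ [snd p])"
    unfolding AE_all_countable
  proof
    fix p :: "nat list \<times> nat"
    show "AE \<omega> in M. length (fst p) = Suc m \<and> last (fst p) = N \<and> snd p \<noteq> N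
      \<longrightarrow> \<omega> \<notin> C (Suc m) (fst p @ [snd p])"
    proof (cases "length (fst p) = Suc m \<and> last (fst p) = N \<and> snd p \<noteq> N")
      case True
      then have "measure M (C (Suc m) (fst p @ [snd p])) = 0"
        using markov K_zero_N by simp
      then show ?thesis using null_C[OF _ C_sets] by (auto elim!: eventually_mono)
    qed auto
  qed
  with AE_space show ?thesis
  proof (eventually_elim)
    case (elim \<omega>)
    then have True: "\<omega> \<in> space M" and h: "\<forall>p::nat list \<times> nat. length (fst p) = Suc m \<and> last (fst p) = N \<and> snd p \<noteq> N
      \<longrightarrow> \<omega> \<notin> C (Suc m) (fst p @ [snd p])" by auto
    have "hist (Suc m) \<omega> = hist m \<omega> @ [X (Suc m) \<omega>]" by (simp add: hist_def)
    then have "\<omega> \<in> C (Suc m) (hist m \<omega> @ [X (Suc m) \<omega>])" using in_C_iff True by simp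
    then show "X m \<omega> = N \<longrightarrow> X (Suc m) \<omega> = N"
      using h[rule_format, of "(hist m \<omega>, X (Suc m) \<omega>)"]
      by (auto simp del: last_hist simp add: last_hist[symmetric])
  qed
qed

lemma AE_X0: "AE \<omega> in M. X 0 \<omega> \<in> {1..N}"
  using chain unfolding inkChain_def by blast

lemma AE_bound_m: "AE \<omega> in M. X m \<omega> \<le> N"
proof (induction m)
  case 0 then show ?case using AE_X0 by (auto elim!: eventually_mono)
next
  case (Suc m) with AE_step_bound[of m] show ?case by eventually_elim auto
qed

lemma AE_bound: "AE \<omega> in M. \<forall>m. X m \<omega> \<le> N"
  unfolding AE_all_countable using AE_bound_m by blast

lemma AE_absorb: "AE \<omega> in M. \<forall>m. X m \<omega> = N \<longrightarrow> (\<forall>j\<ge>m. X j \<omega> = N)"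
proof -
  have "AE \<omega> in M. \<forall>m. X m \<omega> = N \<longrightarrow> X (Suc m) \<omega> = N"
    unfolding AE_all_countable using AE_step_absorb by blast
  then show ?thesis
  proof (rule eventually_mono, intro allI impI)
    fix \<omega> m j assume h: "\<forall>m. X m \<omega> = N \<longrightarrow> X (Suc m) \<omega> = N" and "X m \<omega> = N" and "m \<le> j"
    from \<open>m \<le> j\<close> show "X j \<omega> = N" using h \<open>X m \<omega> = N\<close> by (induction j rule: dec_induct) auto
  qed
qed

lemma hist_H: "\<forall>m. X m \<omega> \<le> N \<Longrightarrow> hist m \<omega> \<in> H m"
  by (auto simp: H_def hist_def)

lemma hist_meas[measurable]: "hist m \<in> measurable M (count_space UNIV)"
  unfolding measurable_count_space_eq2_countable
proof (intro conjI ballI)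
  fix xs :: "nat list"
  show "hist m -` {xs} \<inter> space M \<in> sets M"
  proof (cases "length xs = Suc m")
    case True
    then have "hist m -` {xs} \<inter> space M = C m xs"
      using in_C_iff[OF True] sets.sets_into_space[OF C_sets, of m xs] by blast
    then show ?thesis by simp
  next
    case False
    then have "hist m -` {xs} \<inter> space M = {}" by auto
    then show ?thesis by simp
  qed
qed auto

lemma h_hist_meas[measurable]: "(\<lambda>\<omega>. h (hist m \<omega>)::real) \<in> borel_measurable M"
  by (rule measurable_compose[OF hist_meas]) simp

lemma core:
  assumes S: "S \<in> sets M"
  shows "integrable M (\<lambda>\<omega>. h (hist m \<omega>) * indicator S \<omega>)"
    "(\<integral>\<omega>. h (hist m \<omega>) * indicator S \<omega> \<partial>M) = (\<Sum>xs\<in>H m. h xs * measure M (S \<inter> C m xs))"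
proof -
  have ae: "AE \<omega> in M. h (hist m \<omega>) * indicator S \<omega> = (\<Sum>xs\<in>H m. h xs * indicator (S \<inter> C m xs) \<omega>)"
    using AE_bound AE_space
  proof eventually_elim
    case (elim \<omega>)
    have "(\<Sum>xs\<in>H m. h xs * indicator (S \<inter> C m xs) \<omega>)
        = (\<Sum>xs\<in>H m. if hist m \<omega> = xs then h xs * indicator S \<omega> else 0)"
      using elim by (intro sum.cong) (auto simp: H_def in_C_iff indicator_def)
    also have "\<dots> = h (hist m \<omega>) * indicator S \<omega>"
      using hist_H[OF elim(1)] finH by (simp add: sum.delta)
    finally show ?case by simp
  qed
  have int: "integrable M (\<lambda>\<omega>. \<Sum>xs\<in>H m. h xs * indicator (S \<inter> C m xs) \<omega>)"
    proof (rule Bochner_Integration.integrable_sum)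
    fix xs show "integrable M (\<lambda>\<omega>. h xs * indicator (S \<inter> C m xs) \<omega>)"
      using S by (intro integrable_mult_right integrable_real_indicator) (auto simp: emeasure_eq_measure)
  qed
  show "integrable M (\<lambda>\<omega>. h (hist m \<omega>) * indicator S \<omega>)"
    using integrable_cong_AE[OF _ _ ae] int S by simp
  have "(\<integral>\<omega>. h (hist m \<omega>) * indicator S \<omega> \<partial>M) = (\<integral>\<omega>. (\<Sum>xs\<in>H m. h xs * indicator (S \<inter> C m xs) \<omega>) \<partial>M)"
    by (rule integral_cong_AE) (use S ae in auto)
  also have "\<dots> = (\<Sum>xs\<in>H m. h xs * measure M (S \<inter> C m xs))"
    using S by (subst Bochner_Integration.integral_sum)
      (auto intro!: integrable_mult_right integrable_real_indicator simp: emeasure_eq_measure)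
  finally show "(\<integral>\<omega>. h (hist m \<omega>) * indicator S \<omega> \<partial>M) = (\<Sum>xs\<in>H m. h xs * measure M (S \<inter> C m xs))" .
qed


lemma E_int: "integrable M (\<lambda>\<omega>. h (hist m \<omega>))" "E m h = (\<integral>\<omega>. h (hist m \<omega>) \<partial>M)"
proof -
  have *: "\<And>\<omega>. \<omega> \<in> space M \<Longrightarrow> h (hist m \<omega>) * indicator (space M) \<omega> = h (hist m \<omega>)" by simp
  have i: "integrable M (\<lambda>\<omega>. h (hist m \<omega>) * indicator (space M) \<omega>)" using core(1) by simp
  show "integrable M (\<lambda>\<omega>. h (hist m \<omega>))" using i by (subst (asm) Bochner_Integration.integrable_cong[OF refl *]) auto
  have "(\<integral>\<omega>. h (hist m \<omega>) \<partial>M) = (\<integral>\<omega>. h (hist m \<omega>) * indicator (space M) \<omega> \<partial>M)"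
    using * by (intro Bochner_Integration.integral_cong) auto
  also have "\<dots> = E m h" unfolding E_def using core(2)[of "space M" h m] sets.Int_space_eq1[OF C_sets]
    by simp
  finally show "E m h = (\<integral>\<omega>. h (hist m \<omega>) \<partial>M)" by simp
qed

lemma E_cong: "(\<And>xs. xs \<in> H m \<Longrightarrow> h xs = g xs) \<Longrightarrow> E m h = E m g"
  unfolding E_def by (rule sum.cong) auto

lemma E_mono: "(\<And>xs. xs \<in> H m \<Longrightarrow> h xs \<le> g xs) \<Longrightarrow> E m h \<le> E m g"
  unfolding E_def by (rule sum_mono) (auto intro: mult_right_mono)

lemma E_add: "E m (\<lambda>xs. h xs + g xs) = E m h + E m g"
  unfolding E_def by (simp add: sum.distrib algebra_simps)

lemma E_diff: "E m (\<lambda>xs. h xs - g xs) = E m h - E m g"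
  unfolding E_def by (simp add: sum_subtractf algebra_simps)

lemma E_scale: "E m (\<lambda>xs. a * h xs) = a * E m h"
  unfolding E_def by (simp add: sum_distrib_left algebra_simps)

lemma last_H: "xs \<in> H m \<Longrightarrow> last xs \<le> N"
proof -
  assume "xs \<in> H m"
  then have "xs \<noteq> []" "set xs \<subseteq> {..N}" by (auto simp: H_def)
  then show ?thesis using last_in_set by fastforce
qed

lemma H_Suc: "H (Suc m) = (\<lambda>(xs,y). xs@[y]) ` (H m \<times> {..N})"
proof
  show "H (Suc m) \<subseteq> (\<lambda>(xs,y). xs@[y]) ` (H m \<times> {..N})"
  proof
    fix ys assume ys: "ys \<in> H (Suc m)"
    then have ne: "ys \<noteq> []" by (auto simp: H_def)
    then have "ys = butlast ys @ [last ys]" by simp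
    moreover have "butlast ys \<in> H m" "last ys \<in> {..N}"
      using ys ne last_H[OF ys] by (auto simp: H_def dest: in_set_butlastD)
    ultimately show "ys \<in> (\<lambda>(xs,y). xs@[y]) ` (H m \<times> {..N})" by force
  qed
qed (auto simp: H_def)

lemma E_Suc: "E (Suc m) hh = (\<Sum>xs\<in>H m. \<Sum>y\<in>{..N}. hh (xs@[y]) * inkKernel N (last xs) y * measure M (C m xs))"
proof -
  have inj: "inj_on (\<lambda>(xs,y). xs@[y]) (H m \<times> {..N})"
    by (auto simp: inj_on_def)
  have "E (Suc m) hh = (\<Sum>p\<in>H m \<times> {..N}. hh (fst p @ [snd p]) * measure M (C (Suc m) (fst p @ [snd p])))"
    unfolding E_def H_Suc by (subst sum.reindex[OF inj]) (simp add: case_prod_beta)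
  also have "\<dots> = (\<Sum>xs\<in>H m. \<Sum>y\<in>{..N}. hh (xs@[y]) * measure M (C (Suc m) (xs @ [y])))"
    by (simp add: sum.cartesian_product case_prod_beta)
  also have "\<dots> = (\<Sum>xs\<in>H m. \<Sum>y\<in>{..N}. hh (xs@[y]) * inkKernel N (last xs) y * measure M (C m xs))"
    by (intro sum.cong refl) (auto simp: markov H_def)
  finally show ?thesis .
qed

definition Kf :: "(nat \<Rightarrow> real) \<Rightarrow> nat \<Rightarrow> real" where
  "Kf f x = (f (x + chamDelta N x) + f (x - chamDelta N x)) / 2"

lemma E_step: "E (Suc m) (\<lambda>ys. G (butlast ys) * f (last ys)) = E m (\<lambda>xs. G xs * Kf f (last xs))"
proof -
  have "E (Suc m) (\<lambda>ys. G (butlast ys) * f (last ys))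
      = (\<Sum>xs\<in>H m. G xs * measure M (C m xs) * (\<Sum>y\<in>{..N}. f y * inkKernel N (last xs) y))"
    unfolding E_Suc by (intro sum.cong refl) (simp add: sum_distrib_left algebra_simps)
  also have "\<dots> = E m (\<lambda>xs. G xs * Kf f (last xs))"
    unfolding E_def Kf_def by (intro sum.cong refl) (simp add: Ksum last_H)
  finally show ?thesis .
qed


definition phi :: "nat \<Rightarrow> real" where
  "phi x = sqrt (real x * (real N - real x))"

lemma phi_nonneg: "x \<le> N \<Longrightarrow> 0 \<le> phi x"
  unfolding phi_def by simp

lemma phi_sq: "x \<le> N \<Longrightarrow> (phi x)^2 = real x * (real N - real x)"
  unfolding phi_def by simp

lemma phi_le_N: "x \<le> N \<Longrightarrow> phi x \<le> real N"
proof -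
  assume x: "x \<le> N"
  have "real x * (real N - real x) \<le> (real N)^2"
  proof -
    have "real x * (real N - real x) \<le> real x * real N" by (simp add: mult_left_mono)
    also have "\<dots> \<le> real N * real N" using x by (intro mult_right_mono) auto
    finally show ?thesis by (simp add: power2_eq_square)
  qed
  then show ?thesis unfolding phi_def by (intro real_le_lsqrt) (use x in auto)
qed

lemma g_le_phi: "x \<le> N \<Longrightarrow> real x * (real N - real x) \<le> real N * phi x"
proof -
  assume x: "x \<le> N"
  have "real x * (real N - real x) = phi x * phi x" using phi_sq[OF x] by (simp add: power2_eq_square)
  also have "\<dots> \<le> real N * phi x" using phi_le_N[OF x] phi_nonneg[OF x] by (intro mult_right_mono) auto
  finally show ?thesis .
qed

lemma phi_le_lin: "x \<le> N \<Longrightarrow> phi x \<le> sqrt (real N) * real x"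
proof -
  assume x: "x \<le> N"
  have "real x * (real N - real x) \<le> real N * (real x)^2"
  proof (cases "x = 0")
    case False
    then have "1 \<le> real x" by simp
    then have "real x * (real N - real x) \<le> real x * real N" using x by (intro mult_left_mono) auto
    also have "\<dots> = real x * real N * 1" by simp
    also have "\<dots> \<le> real x * real N * real x" using \<open>1 \<le> real x\<close> by (intro mult_left_mono) auto
    finally show ?thesis by (simp add: power2_eq_square algebra_simps)
  qed simp
  then have "phi x \<le> sqrt (real N * (real x)^2)" unfolding phi_def by (rule real_sqrt_le_mono)
  also have "\<dots> = sqrt (real N) * real x" by (simp add: real_sqrt_mult)
  finally show ?thesis .
qed

lemma Kf_id: "x \<le> N \<Longrightarrow> Kf real x = real x"
  unfolding Kf_def using Delta_le[of x] by (simp add: of_nat_diff)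

lemma Kf_phi: "x \<le> N \<Longrightarrow> Kf phi x \<le> (71/72) * phi x"
proof -
  assume x: "x \<le> N"
  define d where "d = chamDelta N x"
  have d1: "d \<le> x" "d \<le> N - x" using Delta_le[of x] unfolding d_def by auto
  have d3: "min (real x) (real N - real x) \<le> 3 * real d"
    using Delta_ge[of x] x unfolding d_def by (simp add: of_nat_diff min_def split: if_splits)
  have e1: "phi (x + d) = sqrt ((real x + real d) * ((real N - real x) - real d))"
    unfolding phi_def by (simp add: algebra_simps)
  have e2: "phi (x - d) = sqrt ((real x - real d) * ((real N - real x) + real d))"
    unfolding phi_def using d1 by (simp add: algebra_simps of_nat_diff)
  have "phi (x + d) + phi (x - d) \<le> 2 * (71/72) * sqrt (real x * (real N - real x))"
    unfolding e1 e2 using d1 x d3 by (intro key_real) (auto simp: of_nat_diff)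
  then show ?thesis unfolding Kf_def phi_def[of x] d_def[symmetric] by simp
qed

lemma take_hist: "l \<le> n \<Longrightarrow> take (Suc l) (hist n \<omega>) = hist l \<omega>"
  unfolding hist_def by (simp add: take_map min_def del: upt_Suc)

lemma mart: "l \<le> n \<Longrightarrow> E n (\<lambda>ys. G (take (Suc l) ys) * real (last ys)) = E l (\<lambda>ys. G ys * real (last ys))"
proof (induction n rule: dec_induct)
  case base
  show ?case by (rule E_cong) (simp add: H_def)
next
  case (step n)
  have "E (Suc n) (\<lambda>ys. G (take (Suc l) ys) * real (last ys))
      = E (Suc n) (\<lambda>ys. G (take (Suc l) (butlast ys)) * real (last ys))"
    using step(1) by (intro E_cong) (simp add: H_def take_butlast)
  also have "\<dots> = E n (\<lambda>xs. G (take (Suc l) xs) * Kf real (last xs))" by (rule E_step)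
  also have "\<dots> = E n (\<lambda>xs. G (take (Suc l) xs) * real (last xs))"
    by (intro E_cong) (simp add: Kf_id last_H)
  finally show ?case using step(3) by simp
qed

lemma contr: "E m (\<lambda>ys. phi (last ys)) \<le> (71/72)^m * E 0 (\<lambda>ys. phi (last ys))"
proof (induction m)
  case (Suc m)
  have "E (Suc m) (\<lambda>ys. phi (last ys)) = E (Suc m) (\<lambda>ys. (\<lambda>_. 1) (butlast ys) * phi (last ys))" by simp
  also have "\<dots> = E m (\<lambda>xs. 1 * Kf phi (last xs))" by (rule E_step)
  also have "\<dots> \<le> E m (\<lambda>xs. (71/72) * phi (last xs))"
  proof (rule E_mono)
    fix xs assume "xs \<in> H m"
    then show "1 * Kf phi (last xs) \<le> (71/72) * phi (last xs)" using Kf_phi[OF last_H] by simp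
  qed
  also have "\<dots> = (71/72) * E m (\<lambda>xs. phi (last xs))" by (rule E_scale)
  also have "\<dots> \<le> (71/72) * ((71/72)^m * E 0 (\<lambda>ys. phi (last ys)))" using Suc by simp
  finally show ?case by simp
qed simp

lemma measure_pred: "measure M {\<omega>\<in>space M. Q (hist n \<omega>)} = E n (\<lambda>ys. if Q ys then 1 else 0)"
proof -
  let ?S = "{\<omega>\<in>space M. Q (hist n \<omega>)}"
  have S: "?S \<in> sets M" by measurable
  have "measure M ?S = (\<integral>\<omega>. (\<lambda>_. 1::real) (hist n \<omega>) * indicator ?S \<omega> \<partial>M)"
    by (simp add: integral_indicator)
  also have "\<dots> = (\<Sum>xs\<in>H n. 1 * measure M (?S \<inter> C n xs))" by (rule core(2)[OF S])
  also have "\<dots> = E n (\<lambda>ys. if Q ys then 1 else 0)"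
    unfolding E_def
  proof (intro sum.cong refl)
    fix xs assume "xs \<in> H n"
    then have len: "length xs = Suc n" by (simp add: H_def)
    have "?S \<inter> C n xs = (if Q xs then C n xs else {})"
      using in_C_iff[OF len] sets.sets_into_space[OF C_sets, of n xs] by auto
    then show "1 * measure M (?S \<inter> C n xs) = (if Q xs then 1 else 0) * measure M (C n xs)" by simp
  qed
  finally show ?thesis .
qed


lemma nat_close: "\<bar>real (a::nat) - real b\<bar> < 1/2 \<Longrightarrow> a = b"
  by (cases "a < b"; cases "b < a") auto

lemma Fill_eq: "fillEvent M X N = {\<omega>\<in>space M. \<exists>k. \<forall>j\<ge>k. X j \<omega> = N}"
proof -
  have "(\<lambda>l. real (X l \<omega>)) \<longlonglongrightarrow> real N \<longleftrightarrow> (\<exists>k. \<forall>j\<ge>k. X j \<omega> = N)" for \<omega>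
  proof
    assume "(\<lambda>l. real (X l \<omega>)) \<longlonglongrightarrow> real N"
    then obtain k where "\<forall>j\<ge>k. norm (real (X j \<omega>) - real N) < 1/2"
      unfolding LIMSEQ_iff by (meson half_gt_zero zero_less_one)
    then show "\<exists>k. \<forall>j\<ge>k. X j \<omega> = N" using nat_close by auto
  next
    assume "\<exists>k. \<forall>j\<ge>k. X j \<omega> = N"
    then show "(\<lambda>l. real (X l \<omega>)) \<longlonglongrightarrow> real N"
      by (intro tendsto_eventually) (auto simp: eventually_sequentially)
  qed
  then show ?thesis unfolding fillEvent_def by auto
qed

lemma Fill_sets[measurable]: "fillEvent M X N \<in> sets M"
  unfolding Fill_eq by measurable

definition F :: "nat \<Rightarrow> 'a set" where "F k = {\<omega>\<in>space M. \<forall>j\<ge>k. X j \<omega> = N}"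

lemma F_sets[measurable]: "F k \<in> sets M" unfolding F_def by measurable

lemma fill_cyl: assumes xs: "xs \<in> H l"
  shows "measure M (fillEvent M X N \<inter> C l xs) \<le> real (last xs) / real N * measure M (C l xs)"
proof -
  let ?B = "real (last xs) / real N * measure M (C l xs)"
  have bnd: "measure M (F k \<inter> C l xs) \<le> ?B" for k
  proof -
    define n where "n = k + l"
    have ln: "l \<le> n" unfolding n_def by simp
    define G where "G = (\<lambda>zs::nat list. if zs = xs then 1 else (0::real))"
    have "measure M (F k \<inter> C l xs) \<le> measure M {\<omega>\<in>space M. take (Suc l) (hist n \<omega>) = xs \<and> last (hist n \<omega>) = N}"
    proof (rule finite_measure_mono)
      show "F k \<inter> C l xs \<subseteq> {\<omega>\<in>space M. take (Suc l) (hist n \<omega>) = xs \<and> last (hist n \<omega>) = N}"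
        using xs in_C_iff[of xs l] take_hist[OF ln] unfolding F_def n_def by (auto simp: H_def)
    qed measurable
    also have "\<dots> = E n (\<lambda>ys. if take (Suc l) ys = xs \<and> last ys = N then 1 else 0)"
      by (rule measure_pred)
    also have "\<dots> \<le> E n (\<lambda>ys. (1 / real N) * (G (take (Suc l) ys) * real (last ys)))"
      by (rule E_mono) (use N1 in \<open>auto simp: G_def\<close>)
    also have "\<dots> = (1 / real N) * E l (\<lambda>ys. G ys * real (last ys))"
      by (simp only: E_scale mart[OF ln])
    also have "\<dots> = ?B"
    proof -
      have "E l (\<lambda>ys. G ys * real (last ys)) = (\<Sum>ys\<in>H l. if ys = xs then real (last ys) * measure M (C l ys) else 0)"
        unfolding E_def G_def by (intro sum.cong) auto
      also have "\<dots> = real (last xs) * measure M (C l xs)" using xs finH by (simp add: sum.delta')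
      finally show ?thesis by simp
    qed
    finally show ?thesis .
  qed
  have lim: "(\<lambda>k. measure M (F k \<inter> C l xs)) \<longlonglongrightarrow> measure M (\<Union>k. F k \<inter> C l xs)"
    by (rule finite_Lim_measure_incseq) (auto simp: incseq_def F_def)
  have "(\<Union>k. F k \<inter> C l xs) = fillEvent M X N \<inter> C l xs"
    unfolding Fill_eq F_def by auto
  then show ?thesis using LIMSEQ_le_const2[OF lim] bnd by auto
qed


lemma main_loc:
  "1 - (\<integral>\<omega>. real (X l \<omega>) / real N * indicator (fillEvent M X N) \<omega> \<partial>M)
               / measure M (fillEvent M X N)
         \<le> (71/72) ^ l * sqrt (real N)"
proof -
  define c :: real where "c = 71/72"
  define Fl where "Fl = fillEvent M X N"
  define p where "p = measure M Fl"
  define I where "I = (\<integral>\<omega>. real (X l \<omega>) / real N * indicator Fl \<omega> \<partial>M)"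
  define e0 where "e0 = E 0 (\<lambda>ys. real (last ys))"
  define f0 where "f0 = E 0 (\<lambda>ys. phi (last ys))"
  have FlS: "Fl \<in> sets M" unfolding Fl_def by simp
  have Npos: "0 < real N" using N1 by simp
  have c0: "0 \<le> c" "c < 1" unfolding c_def by auto
  have e0_ge: "1 \<le> e0"
  proof -
    have "e0 = (\<integral>\<omega>. real (X 0 \<omega>) \<partial>M)" unfolding e0_def E_int(2) by simp
    moreover have "(\<integral>\<omega>. 1 \<partial>M) \<le> (\<integral>\<omega>. real (X 0 \<omega>) \<partial>M)"
    proof (rule integral_mono_AE)
      show "integrable M (\<lambda>\<omega>. real (X 0 \<omega>))" using E_int(1)[of "\<lambda>ys. real (last ys)" 0] by simp
      show "AE \<omega> in M. 1 \<le> real (X 0 \<omega>)" using AE_X0 by (auto elim!: eventually_mono)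
    qed simp
    ultimately show ?thesis by (simp add: prob_space)
  qed
  have f0_nn: "0 \<le> f0" unfolding f0_def E_def
    by (intro sum_nonneg mult_nonneg_nonneg) (auto simp: phi_nonneg last_H)
  have f0_le: "f0 \<le> sqrt (real N) * e0"
  proof -
    have "f0 \<le> E 0 (\<lambda>ys. sqrt (real N) * real (last ys))" unfolding f0_def
      by (rule E_mono) (simp add: phi_le_lin last_H)
    then show ?thesis unfolding e0_def E_scale .
  qed
  have lowbnd: "e0 - real N * c^n * f0 \<le> real N * p" for n
  proof -
    have "E n (\<lambda>ys. real (last ys)) = e0"
      using mart[of 0 n "\<lambda>_. 1"] unfolding e0_def by simp
    moreover have "E n (\<lambda>ys. real (last ys)) \<le>
        E n (\<lambda>ys. real N * (if last ys = N then 1 else 0) + real N * phi (last ys))"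
    proof (rule E_mono)
      fix ys assume ys: "ys \<in> H n"
      have x: "last ys \<le> N" using last_H[OF ys] .
      have "real (last ys) \<le> real N * (if last ys = N then 1 else 0) + real (last ys) * (real N - real (last ys))"
      proof (cases "last ys = N")
        case False
        then have "1 \<le> real N - real (last ys)" using x by linarith
        then have "real (last ys) * 1 \<le> real (last ys) * (real N - real (last ys))"
          by (intro mult_left_mono) auto
        then show ?thesis using False by simp
      qed simp
      then show "real (last ys) \<le> real N * (if last ys = N then 1 else 0) + real N * phi (last ys)"
        using g_le_phi[OF x] by linarith
    qed
    moreover have "E n (\<lambda>ys. real N * (if last ys = N then 1 else 0) + real N * phi (last ys))
        = real N * E n (\<lambda>ys. if last ys = N then 1 else 0) + real N * E n (\<lambda>ys. phi (last ys))"
      by (simp add: E_add E_scale)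
    moreover have "E n (\<lambda>ys. if last ys = N then 1 else 0) \<le> p"
    proof -
      have "E n (\<lambda>ys. if last ys = N then 1 else 0) = measure M {\<omega>\<in>space M. last (hist n \<omega>) = N}"
        by (rule measure_pred[symmetric])
      also have "\<dots> \<le> p" unfolding p_def
      proof (rule finite_measure_mono_AE)
        show "AE \<omega> in M. \<omega> \<in> {\<omega> \<in> space M. last (hist n \<omega>) = N} \<longrightarrow> \<omega> \<in> Fl"
          using AE_absorb AE_space
        proof eventually_elim
          case (elim \<omega>) then show ?case unfolding Fl_def Fill_eq by auto
        qed
      qed (rule FlS)
      finally show ?thesis .
    qed
    moreover have "E n (\<lambda>ys. phi (last ys)) \<le> c^n * f0" unfolding c_def f0_def by (rule contr)
    ultimately have A: "e0 \<le> real N * E n (\<lambda>ys. if last ys = N then 1 else 0) + real N * E n (\<lambda>ys. phi (last ys))"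
      and B: "E n (\<lambda>ys. if last ys = N then 1 else 0) \<le> p" and D: "E n (\<lambda>ys. phi (last ys)) \<le> c^n * f0"
      by linarith+
    have "real N * E n (\<lambda>ys. if last ys = N then 1 else 0) \<le> real N * p" using B Npos by simp
    moreover have "real N * E n (\<lambda>ys. phi (last ys)) \<le> real N * (c^n * f0)" using D Npos by simp
    ultimately show ?thesis using A by (simp add: algebra_simps)
  qed
  have p_ge: "e0 / real N \<le> p"
  proof (rule ccontr)
    assume "\<not> e0 / real N \<le> p"
    then have gap: "0 < e0 - real N * p" using Npos by (simp add: field_simps)
    define y where "y = (e0 - real N * p) / (real N * f0 + 1)"
    have den: "0 < real N * f0 + 1" proof -
      have "0 \<le> real N * f0" using Npos f0_nn by simp
      then show ?thesis by linarith
    qed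
    have "0 < y" unfolding y_def using gap den by simp
    then obtain n where n: "c^n < y" using real_arch_pow_inv c0 by blast
    have "c^n * (real N * f0 + 1) < e0 - real N * p" using n den unfolding y_def by (simp add: field_simps)
    moreover have "c^n * (real N * f0) \<le> c^n * (real N * f0 + 1)"
      using c0 by (intro mult_left_mono) auto
    ultimately have "real N * c^n * f0 < e0 - real N * p" by (simp add: algebra_simps)
    then show False using lowbnd[of n] by simp
  qed
  have p_pos: "0 < p"
  proof -
    have "0 < e0 / real N" using e0_ge Npos by simp
    then show ?thesis using p_ge by simp
  qed
  have I_eq: "I = (\<Sum>xs\<in>H l. real (last xs) / real N * measure M (Fl \<inter> C l xs))"
  proof -
    have "I = (\<integral>\<omega>. (\<lambda>ys. real (last ys) / real N) (hist l \<omega>) * indicator Fl \<omega> \<partial>M)"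
      unfolding I_def by simp
    also have "\<dots> = (\<Sum>xs\<in>H l. real (last xs) / real N * measure M (Fl \<inter> C l xs))" by (rule core(2)[OF FlS])
    finally show ?thesis .
  qed
  have p_eq: "p = (\<Sum>xs\<in>H l. measure M (Fl \<inter> C l xs))"
  proof -
    have "p = (\<integral>\<omega>. (\<lambda>ys. 1) (hist l \<omega>) * indicator Fl \<omega> \<partial>M)"
      unfolding p_def using FlS by (simp add: integral_indicator sets.Int_space_eq2)
    also have "\<dots> = (\<Sum>xs\<in>H l. 1 * measure M (Fl \<inter> C l xs))" by (rule core(2)[OF FlS])
    finally show ?thesis by simp
  qed
  have pI: "p - I \<le> E l (\<lambda>ys. (1 - real (last ys) / real N) * (real (last ys) / real N))"
  proof -
    have "p - I = (\<Sum>xs\<in>H l. (1 - real (last xs) / real N) * measure M (Fl \<inter> C l xs))"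
      unfolding p_eq I_eq sum_subtractf[symmetric] by (intro sum.cong) (auto simp: algebra_simps)
    also have "\<dots> \<le> (\<Sum>xs\<in>H l. (1 - real (last xs) / real N) * (real (last xs) / real N * measure M (C l xs)))"
    proof (intro sum_mono mult_left_mono)
      fix xs assume xs: "xs \<in> H l"
      show "measure M (Fl \<inter> C l xs) \<le> real (last xs) / real N * measure M (C l xs)"
        unfolding Fl_def by (rule fill_cyl[OF xs])
      show "0 \<le> 1 - real (last xs) / real N" using last_H[OF xs] Npos by (simp add: field_simps)
    qed
    also have "\<dots> = E l (\<lambda>ys. (1 - real (last ys) / real N) * (real (last ys) / real N))"
      unfolding E_def by (intro sum.cong) auto
    finally show ?thesis .
  qed
  have "E l (\<lambda>ys. (1 - real (last ys) / real N) * (real (last ys) / real N)) \<le> E l (\<lambda>ys. (1 / real N) * phi (last ys))"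
  proof (rule E_mono)
    fix ys assume ys: "ys \<in> H l"
    have x: "last ys \<le> N" using last_H[OF ys] .
    have "(1 - real (last ys) / real N) * (real (last ys) / real N)
        = (real (last ys) * (real N - real (last ys))) / (real N * real N)"
      using Npos by (simp add: field_simps)
    also have "\<dots> \<le> (real N * phi (last ys)) / (real N * real N)"
      using g_le_phi[OF x] Npos by (intro divide_right_mono) auto
    also have "\<dots> = (1 / real N) * phi (last ys)" using Npos by simp
    finally show "(1 - real (last ys) / real N) * (real (last ys) / real N) \<le> (1 / real N) * phi (last ys)" .
  qed
  also have "\<dots> = (1 / real N) * E l (\<lambda>ys. phi (last ys))" by (rule E_scale)
  also have "\<dots> \<le> (1 / real N) * (c^l * f0)"
    using contr[of l] Npos unfolding c_def f0_def by (intro mult_left_mono) auto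
  also have "\<dots> \<le> (1 / real N) * (c^l * (sqrt (real N) * e0))"
    using f0_le c0 Npos by (intro mult_left_mono) auto
  also have "\<dots> = c^l * sqrt (real N) * (e0 / real N)" by simp
  also have "\<dots> \<le> c^l * sqrt (real N) * p"
    using p_ge c0 by (intro mult_left_mono) auto
  finally have "p - I \<le> c^l * sqrt (real N) * p" using pI by linarith
  then have "(p - I) / p \<le> c^l * sqrt (real N)" using p_pos by (simp add: divide_le_eq)
  then have "1 - I / p \<le> c^l * sqrt (real N)" using p_pos by (simp add: diff_divide_distrib)
  then show ?thesis unfolding I_def p_def Fl_def c_def by simp
qed

end

theorem mainTheorem9:
  fixes M :: "'a measure" and X :: "nat \<Rightarrow> 'a \<Rightarrow> nat" and N l :: nat
  assumes "prob_space M"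
    and "N \<ge> 1"
    and "inkChain M X N"
    and "l \<ge> 1"
  shows "1 - (\<integral>\<omega>. real (X l \<omega>) / real N * indicator (fillEvent M X N) \<omega> \<partial>M)
               / measure M (fillEvent M X N)
         \<le> (71/72) ^ l * sqrt (real N)"
proof -
  interpret ink M X N using assms by (simp add: ink_def ink_axioms_def)
  show ?thesis by (rule main_loc)
qed

end
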